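(* Let $g$ be a Riemannian metric on $\mathbb{R}^D$ written as $g_x(u,u)=u^{\top}H(x)u$ with $\|H(x)-H(y)\|_{\mathcal{B}}\le L_H\|x-y\|_2$ for all $x,y$. Let $N\ge1$, $\gamma^{\mathrm{p}}\in\mathcal{C}^N_{\mathrm{p}}$, and $K_3^2:=\frac1N\sum_{n=0}^{N-1}\|\beta^{\mathrm{p}}(t_n)\|_2^2$. Then $$\left|\mathcal{E}^g(\gamma^{\mathrm{pl}})-\mathcal{E}^g_{\mathrm{tra},N}(\gamma^{\mathrm{p}})\right|\le\frac{L_HK_3^3}{4N^{1/2}}.$$
   Context: $t_n=n/N$, $h=1/N$; $\mathcal{C}^N_{\mathrm{p}}$ is the set of maps $\gamma^{\mathrm{p}}:\{t_0,\dots,t_N\}\to\mathbb{R}^D$; $\beta^{\mathrm{p}}(t_n)=(\gamma^{\mathrm{p}}(t_{n+1})-\gamma^{\mathrm{p}}(t_n))/h$; $\gamma^{\mathrm{pl}}(t_n+s)=(1-Ns)\gamma^{\mathrm{p}}(t_n)+Ns\gamma^{\mathrm{p}}(t_{n+1})$ for $0\le s\le h$ is the linear interpolation; $\mathcal{E}^g(\gamma)=\int_0^1 g_{\gamma(t)}(\dot\gamma,\dot\gamma)dt$; $\mathcal{E}^g_{\mathrm{tra},N}(\gamma^{\mathrm{p}})=\frac1N\sum_{n=0}^{N-1}g_{(\gamma^{\mathrm{p}}(t_n)+\gamma^{\mathrm{p}}(t_{n+1}))/2}(\beta^{\mathrm{p}}(t_n),\beta^{\mathrm{p}}(t_n))$.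 $\|\cdot\|_{\mathcal{B}}$ is the operator norm. *)

theory Defs
  imports "HOL-Analysis.Analysis"
begin

definition metric_g :: "(real^'n \<Rightarrow> real^'n^'n) \<Rightarrow> real^'n \<Rightarrow> real^'n \<Rightarrow> real^'n \<Rightarrow> real" where
  "metric_g H x u v = u \<bullet> (H x *v v)"

definition energy :: "(real^'n \<Rightarrow> real^'n^'n) \<Rightarrow> (real \<Rightarrow> real^'n) \<Rightarrow> real" where
  "energy H \<gamma> = integral {0..1}
     (\<lambda>t. metric_g H (\<gamma> t) (vector_derivative \<gamma> (at t)) (vector_derivative \<gamma> (at t)))"

text \<open>Discrete difference quotient beta^p(t_n) = (gamma^p(t_{n+1}) - gamma^p(t_n))/h, h = 1/N;
  discrete curves are indexed by n (meaning the value at t_n = n/N).\<close>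
definition beta_p :: "nat \<Rightarrow> (nat \<Rightarrow> real^'n) \<Rightarrow> nat \<Rightarrow> real^'n" where
  "beta_p N \<gamma>p n = real N *\<^sub>R (\<gamma>p (Suc n) - \<gamma>p n)"

definition pl_interp :: "nat \<Rightarrow> (nat \<Rightarrow> real^'n) \<Rightarrow> real \<Rightarrow> real^'n" where
  "pl_interp N \<gamma>p t =
     (let n = min (nat \<lfloor>t * real N\<rfloor>) (N - 1); s = t - real n / real N
      in (1 - real N * s) *\<^sub>R \<gamma>p n + (real N * s) *\<^sub>R \<gamma>p (Suc n))"

definition energy_tra :: "(real^'n \<Rightarrow> real^'n^'n) \<Rightarrow> nat \<Rightarrow> (nat \<Rightarrow> real^'n) \<Rightarrow> real" where
  "energy_tra H N \<gamma>p = (1 / real N) * (\<Sum>n<N.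
      metric_g H ((1/2) *\<^sub>R (\<gamma>p n + \<gamma>p (Suc n))) (beta_p N \<gamma>p n) (beta_p N \<gamma>p n))"

end

theory Submission
  imports Defs
begin

lemma key_bound:
  fixes H :: "real^'n \<Rightarrow> real^'n^'n"
  assumes lip: "\<And>x y. onorm (\<lambda>u. (H x - H y) *v u) \<le> L_H * norm (x - y)"
  shows "\<bar>metric_g H p b b - metric_g H q b b\<bar> \<le> L_H * norm (p - q) * (norm b)\<^sup>2"
proof -
  have "metric_g H p b b - metric_g H q b b = b \<bullet> ((H p - H q) *v b)"
    by (simp add: metric_g_def matrix_vector_mult_diff_rdistrib inner_diff_right)
  also have "\<bar>\<dots>\<bar> \<le> norm b * norm ((H p - H q) *v b)"
    by (rule Cauchy_Schwarz_ineq2)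
  also have "norm b * norm ((H p - H q) *v b) \<le> norm b * (L_H * norm (p - q) * norm b)"
  proof (rule mult_left_mono)
    have "norm ((H p - H q) *v b) \<le> onorm (\<lambda>u. (H p - H q) *v u) * norm b"
      using onorm[OF matrix_vector_mul_bounded_linear] by blast
    also have "\<dots> \<le> L_H * norm (p - q) * norm b"
      by (rule mult_right_mono[OF lip]) simp
    finally show "norm ((H p - H q) *v b) \<le> L_H * norm (p - q) * norm b" .
  qed simp
  finally show ?thesis by (simp add: power2_eq_square algebra_simps)
qed

lemma LH_nonneg:
  fixes H :: "real^'n \<Rightarrow> real^'n^'n"
  assumes lip: "\<And>x y. onorm (\<lambda>u. (H x - H y) *v u) \<le> L_H * norm (x - y)"
  shows "L_H \<ge> 0"
proof -
  have "0 \<le> onorm (\<lambda>u. (H 1 - H 0) *v u)"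
    by (rule onorm_pos_le[OF matrix_vector_mul_bounded_linear])
  also have "\<dots> \<le> L_H * norm (1 - (0::real^'n))" by (rule lip)
  finally have "0 \<le> L_H * norm (1::real^'n)" by simp
  moreover have "norm (1::real^'n) > 0" by simp
  ultimately show ?thesis by (simp add: zero_le_mult_iff)
qed

lemma abs_int:
  fixes a b :: real
  assumes "a \<le> b"
  shows "((\<lambda>t. \<bar>t - (a+b)/2\<bar>) has_integral (b-a)^2/4) {a..b}"
proof -
  let ?m = "(a+b)/2"
  have 1: "((\<lambda>t. \<bar>t - ?m\<bar>) has_integral ((?m - a)^2/2)) {a..?m}"
  proof -
    have "((\<lambda>t. ?m - t) has_integral ((\<lambda>t. -((?m - t)^2/2)) ?m - (\<lambda>t. -((?m - t)^2/2)) a)) {a..?m}"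
      apply (rule fundamental_theorem_of_calculus)
      using assms apply simp
      apply (rule has_vector_derivative_at_within)
      apply (subst has_real_derivative_iff_has_vector_derivative[symmetric])
      apply (rule derivative_eq_intros refl | simp add: field_simps)+
      done
    then have "((\<lambda>t. ?m - t) has_integral ((?m - a)^2/2)) {a..?m}" by simp
    then show ?thesis
      by (rule has_integral_spike_finite[where S="{}", rotated 2]) auto
  qed
  have 2: "((\<lambda>t. \<bar>t - ?m\<bar>) has_integral ((b - ?m)^2/2)) {?m..b}"
  proof -
    have "((\<lambda>t. t - ?m) has_integral ((\<lambda>t. ((t - ?m)^2/2)) b - (\<lambda>t. ((t - ?m)^2/2)) ?m)) {?m..b}"
      apply (rule fundamental_theorem_of_calculus)
      using assms apply simp
      apply (rule has_vector_derivative_at_within)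
      apply (subst has_real_derivative_iff_has_vector_derivative[symmetric])
      apply (rule derivative_eq_intros refl | simp add: field_simps)+
      done
    then have "((\<lambda>t. t - ?m) has_integral ((b - ?m)^2/2)) {?m..b}" by simp
    then show ?thesis
      by (rule has_integral_spike_finite[where S="{}", rotated 2]) auto
  qed
  have "((\<lambda>t. \<bar>t - ?m\<bar>) has_integral ((?m - a)^2/2 + (b - ?m)^2/2)) {a..b}"
    using has_integral_combine[OF _ _ 1 2] assms by simp
  moreover have "(?m - a)^2/2 + (b - ?m)^2/2 = (b-a)^2/4"
    by (simp add: field_simps power2_eq_square)
  ultimately show ?thesis by metis
qed

lemma piece:
  fixes H :: "real^'n \<Rightarrow> real^'n^'n" and x b :: "real^'n" and a h :: real
  assumes lip: "\<And>x y. onorm (\<lambda>u. (H x - H y) *v u) \<le> L_H * norm (x - y)"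
    and h: "h \<ge> 0"
  shows "\<exists>J. ((\<lambda>t. metric_g H (x + (t - a) *\<^sub>R b) b b) has_integral J) {a..a+h} \<and>
     \<bar>J - h * metric_g H (x + (h/2) *\<^sub>R b) b b\<bar> \<le> L_H * (norm b)^3 * h^2/4"
proof -
  define g where "g t = metric_g H (x + (t - a) *\<^sub>R b) b b" for t
  define c where "c = metric_g H (x + (h/2) *\<^sub>R b) b b"
  have L: "L_H \<ge> 0" using LH_nonneg[OF lip] .
  have gl: "\<bar>g t - g s\<bar> \<le> (L_H * (norm b)^3) * \<bar>t - s\<bar>" for t s
  proof -
    have "\<bar>g t - g s\<bar> \<le> L_H * norm ((x + (t - a) *\<^sub>R b) - (x + (s - a) *\<^sub>R b)) * (norm b)\<^sup>2"
      unfolding g_def by (rule key_bound[OF lip])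
    also have "(x + (t - a) *\<^sub>R b) - (x + (s - a) *\<^sub>R b) = (t - s) *\<^sub>R b"
      by (simp add: algebra_simps)
    finally show ?thesis by (simp add: power2_eq_square power3_eq_cube mult_ac)
  qed
  have "(L_H * (norm b)^3)-lipschitz_on {a..a+h} g"
    unfolding lipschitz_on_def using L gl by (simp add: dist_real_def)
  then have "continuous_on {a..a+h} g" by (rule lipschitz_on_continuous_on)
  then have "g integrable_on {a..a+h}" by (rule integrable_continuous_interval)
  then obtain J where J: "(g has_integral J) {a..a+h}" by blast
  have C: "((\<lambda>t. c) has_integral h * c) {a..a+h}"
    using has_integral_const_real[of c a "a+h"] h by simp
  have D: "((\<lambda>t. g t - c) has_integral J - h * c) {a..a+h}"
    by (rule has_integral_diff[OF J C])
  have A: "((\<lambda>t. (L_H * (norm b)^3) * \<bar>t - (a + (a+h))/2\<bar>) has_integral (L_H * (norm b)^3) * ((a+h-a)^2/4)) {a..a+h}"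
    by (rule has_integral_mult_right[OF abs_int]) (use h in simp)
  have bnd: "\<bar>g t - c\<bar> \<le> (L_H * (norm b)^3) * \<bar>t - (a + (a+h))/2\<bar>" for t
  proof -
    have "c = g (a + h/2)" by (simp add: c_def g_def)
    then have "\<bar>g t - c\<bar> \<le> (L_H * (norm b)^3) * \<bar>t - (a + h/2)\<bar>" using gl by simp
    also have "a + h/2 = (a + (a+h))/2" by simp
    finally show ?thesis .
  qed
  have e: "(L_H * (norm b)^3) * ((a+h-a)^2/4) = L_H * (norm b)^3 * h^2/4" by simp
  have "J - h * c \<le> (L_H * (norm b)^3) * ((a+h-a)^2/4)"
    by (rule has_integral_le[OF D A]) (rule order_trans[OF _ bnd]; simp)
  moreover have "-(J - h * c) \<le> (L_H * (norm b)^3) * ((a+h-a)^2/4)"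
    by (rule has_integral_le[OF has_integral_neg[OF D] A]) (rule order_trans[OF _ bnd]; simp)
  ultimately have "\<bar>J - h * c\<bar> \<le> L_H * (norm b)^3 * h^2/4" 
    using e by linarith
  then show ?thesis using J unfolding g_def c_def by blast
qed

lemma pl_on:
  assumes n: "n < N" and t1: "real n / real N < t" and t2: "t < real (Suc n) / real N"
  shows "pl_interp N \<gamma>p t = \<gamma>p n + (t - real n / real N) *\<^sub>R beta_p N \<gamma>p n"
proof -
  have N0: "real N > 0" using n by simp
  have "real n < t * real N" using t1 N0 by (simp add: field_simps)
  moreover have "t * real N < real n + 1" using t2 N0 by (simp add: field_simps)
  ultimately have fl: "\<lfloor>t * real N\<rfloor> = int n" by (simp add: floor_eq_iff)
  have mn: "min (nat \<lfloor>t * real N\<rfloor>) (N - 1) = n" using fl n by simp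
  have "(1 - real N * (t - real n / real N)) *\<^sub>R \<gamma>p n + (real N * (t - real n / real N)) *\<^sub>R \<gamma>p (Suc n)
      = \<gamma>p n + (t - real n / real N) *\<^sub>R (real N *\<^sub>R (\<gamma>p (Suc n) - \<gamma>p n))"
    by (simp add: algebra_simps)
  then show ?thesis unfolding pl_interp_def Let_def mn beta_p_def by simp
qed

lemma sum_cube_le:
  fixes f :: "nat \<Rightarrow> real"
  assumes "\<And>n. f n \<ge> 0"
  shows "(\<Sum>n<N. f n ^ 3) \<le> (\<Sum>n<N. f n ^ 2) * sqrt (\<Sum>n<N. f n ^ 2)"
proof -
  let ?S = "\<Sum>n<N. f n ^ 2"
  have "f n ^ 3 \<le> f n ^ 2 * sqrt ?S" if "n < N" for n
  proof -
    have "f n ^ 2 \<le> ?S" by (rule member_le_sum) (use that in auto)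
    then have "f n \<le> sqrt ?S" using assms[of n] real_le_rsqrt by blast
    then have "f n ^ 2 * f n \<le> f n ^ 2 * sqrt ?S" by (rule mult_left_mono) simp
    then show ?thesis by (simp add: power2_eq_square power3_eq_cube)
  qed
  then have "(\<Sum>n<N. f n ^ 3) \<le> (\<Sum>n<N. f n ^ 2 * sqrt ?S)" by (intro sum_mono) auto
  also have "\<dots> = ?S * sqrt ?S" by (simp add: sum_distrib_right)
  finally show ?thesis .
qed

theorem proposition7p8:
  fixes H :: "real^'n \<Rightarrow> real^'n^'n" and L_H :: real and N :: nat
    and \<gamma>p :: "nat \<Rightarrow> real^'n" and K3 :: real
  assumes sym: "\<And>x. transpose (H x) = H x"
    and posdef: "\<And>x u. u \<noteq> 0 \<Longrightarrow> u \<bullet> (H x *v u) > 0"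
    and lip: "\<And>x y. onorm (\<lambda>u. (H x - H y) *v u) \<le> L_H * norm (x - y)"
    and N: "N \<ge> 1"
    and K3: "K3 = sqrt ((1 / real N) * (\<Sum>n<N. (norm (beta_p N \<gamma>p n))\<^sup>2))"
  shows "\<bar>energy H (pl_interp N \<gamma>p) - energy_tra H N \<gamma>p\<bar> \<le> L_H * K3 ^ 3 / (4 * sqrt (real N))"
proof -
  define b where "b n = beta_p N \<gamma>p n" for n
  define a where "a n = real n / real N" for n
  define F where "F t = metric_g H (pl_interp N \<gamma>p t) (vector_derivative (pl_interp N \<gamma>p) (at t))
      (vector_derivative (pl_interp N \<gamma>p) (at t))" for t
  define c where "c n = metric_g H ((1/2) *\<^sub>R (\<gamma>p n + \<gamma>p (Suc n))) (b n) (b n)" for n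
  have N0: "real N > 0" using N by simp
  have L: "L_H \<ge> 0" using LH_nonneg[OF lip] .
  have aS: "a (Suc n) = a n + 1 / real N" for n
    unfolding a_def using N0 by (simp add: field_simps)
  have mid: "\<gamma>p n + ((1 / real N)/2) *\<^sub>R b n = (1/2) *\<^sub>R (\<gamma>p n + \<gamma>p (Suc n))" for n
    unfolding b_def beta_p_def using N0 by (simp add: vec_eq_iff field_simps)
  have "\<forall>n. \<exists>J. n < N \<longrightarrow> ((F has_integral J) {a n..a (Suc n)} \<and>
      \<bar>J - (1 / real N) * c n\<bar> \<le> L_H * (norm (b n))^3 * (1 / real N)^2/4)"
  proof (intro allI impI)
    fix n
    obtain J where J: "((\<lambda>t. metric_g H (\<gamma>p n + (t - a n) *\<^sub>R b n) (b n) (b n)) has_integral J) {a n..a n + 1 / real N}"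
      and Jb: "\<bar>J - (1 / real N) * metric_g H (\<gamma>p n + ((1 / real N)/2) *\<^sub>R b n) (b n) (b n)\<bar>
               \<le> L_H * (norm (b n))^3 * (1 / real N)^2/4"
      using piece[OF lip, of "1 / real N" "\<gamma>p n" "a n" "b n"] by auto
    show "\<exists>J. n < N \<longrightarrow> ((F has_integral J) {a n..a (Suc n)} \<and>
      \<bar>J - (1 / real N) * c n\<bar> \<le> L_H * (norm (b n))^3 * (1 / real N)^2/4)"
    proof (intro exI impI conjI)
      assume n: "n < N"
      show "\<bar>J - (1 / real N) * c n\<bar> \<le> L_H * (norm (b n))^3 * (1 / real N)^2/4"
        using Jb unfolding mid c_def .
      show "(F has_integral J) {a n..a (Suc n)}"
      proof (rule has_integral_spike_finite[of "{a n, a (Suc n)}"])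
        show "finite {a n, a (Suc n)}" by simp
        show "((\<lambda>t. metric_g H (\<gamma>p n + (t - a n) *\<^sub>R b n) (b n) (b n)) has_integral J) {a n..a (Suc n)}"
          using J unfolding aS .
        fix t assume t: "t \<in> {a n..a (Suc n)} - {a n, a (Suc n)}"
        then have t1: "a n < t" and t2: "t < a (Suc n)" by auto
        have eqS: "pl_interp N \<gamma>p s = \<gamma>p n + (s - a n) *\<^sub>R b n" if "s \<in> {a n<..<a (Suc n)}" for s
          using pl_on[OF n, of s \<gamma>p] that unfolding a_def b_def by auto
        have "((\<lambda>s. \<gamma>p n + (s - a n) *\<^sub>R b n) has_vector_derivative b n) (at t)"
          by (rule derivative_eq_intros refl | simp)+
        then have "(pl_interp N \<gamma>p has_vector_derivative b n) (at t)"
          by (rule has_vector_derivative_transform_within_open[of _ _ _ "{a n<..<a (Suc n)}"])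
             (use t1 t2 eqS in auto)
        then have "vector_derivative (pl_interp N \<gamma>p) (at t) = b n" by (rule vector_derivative_at)
        then show "F t = metric_g H (\<gamma>p n + (t - a n) *\<^sub>R b n) (b n) (b n)"
          unfolding F_def using eqS[of t] t1 t2 by simp
      qed
    qed
  qed
  then obtain J where J: "\<And>n. n < N \<Longrightarrow> (F has_integral J n) {a n..a (Suc n)}"
    and Jb: "\<And>n. n < N \<Longrightarrow> \<bar>J n - (1 / real N) * c n\<bar> \<le> L_H * (norm (b n))^3 * (1 / real N)^2/4"
    by metis
  have tot: "k \<le> N \<Longrightarrow> (F has_integral (\<Sum>n<k. J n)) {0..a k}" for k
  proof (induction k)
    case 0
    then show ?case unfolding a_def by (simp add: has_integral_refl)
  next
    case (Suc k)
    have "(F has_integral (\<Sum>n<k. J n) + J k) {0..a (Suc k)}"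
      by (rule has_integral_combine[OF _ _ Suc.IH J]) (use Suc.prems N0 in \<open>auto simp: a_def divide_right_mono\<close>)
    then show ?case by simp
  qed
  have "a N = 1" unfolding a_def using N0 by simp
  then have "(F has_integral (\<Sum>n<N. J n)) {0..1}" using tot[of N] by simp
  then have E: "energy H (pl_interp N \<gamma>p) = (\<Sum>n<N. J n)"
    unfolding energy_def F_def[symmetric] by (rule integral_unique)
  have Et: "energy_tra H N \<gamma>p = (\<Sum>n<N. (1 / real N) * c n)"
    unfolding energy_tra_def c_def b_def by (simp add: sum_distrib_left)
  have "\<bar>energy H (pl_interp N \<gamma>p) - energy_tra H N \<gamma>p\<bar> = \<bar>\<Sum>n<N. (J n - (1 / real N) * c n)\<bar>"
    unfolding E Et by (simp add: sum_subtractf)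
  also have "\<dots> \<le> (\<Sum>n<N. \<bar>J n - (1 / real N) * c n\<bar>)" by (rule sum_abs)
  also have "\<dots> \<le> (\<Sum>n<N. L_H * (norm (b n))^3 * (1 / real N)^2/4)" by (intro sum_mono Jb) simp
  also have "\<dots> = L_H / (4 * real N ^ 2) * (\<Sum>n<N. (norm (b n))^3)"
    by (simp add: sum_distrib_left sum_divide_distrib power2_eq_square field_simps)
  also have "\<dots> \<le> L_H / (4 * real N ^ 2) * ((\<Sum>n<N. (norm (b n))^2) * sqrt (\<Sum>n<N. (norm (b n))^2))"
    by (intro mult_left_mono sum_cube_le) (use L in auto)
  also have "\<dots> = L_H * K3 ^ 3 / (4 * sqrt (real N))"
  proof -
    define S where "S = (\<Sum>n<N. (norm (b n))^2)"
    have S0: "S \<ge> 0" unfolding S_def by (simp add: sum_nonneg)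
    have "K3 = sqrt S / sqrt (real N)" unfolding K3 S_def b_def by (simp add: real_sqrt_divide)
    then have "K3 ^ 3 = (sqrt S)^3 / (sqrt (real N))^3" by (simp add: power_divide)
    also have "(sqrt S)^3 = S * sqrt S" using S0 by (simp add: power3_eq_cube)
    also have "(sqrt (real N))^3 = real N * sqrt (real N)" using N0 by (simp add: power3_eq_cube)
    finally have K: "K3 ^ 3 = S * sqrt S / (real N * sqrt (real N))" .
    have sN: "sqrt (real N) * sqrt (real N) = real N" using N0 by simp
    have "L_H * K3 ^ 3 / (4 * sqrt (real N)) = L_H * (S * sqrt S) / (4 * (real N * (sqrt (real N) * sqrt (real N))))"
      unfolding K by (simp add: field_simps)
    also have "\<dots> = L_H / (4 * real N ^ 2) * (S * sqrt S)" unfolding sN by (simp add: power2_eq_square)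
    finally show ?thesis unfolding S_def[symmetric] by simp
  qed
  finally show ?thesis .
qed
end
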